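(* For $n\ge 1$, the complete graph $K_n$ satisfies $\nu_*(K_n)=\frac{(n-1)n(n+1)(n+4)}{12}$.
   Context: For a finite simple graph $G=(V,E)$ with $\ell=|V|+|E|$, a construction sequence (c-sequence) is a bijection $x:\{1,\dots,\ell\}\to V\sqcup E$ such that every edge $e=uw$ satisfies $x^{-1}(e)>\max\{x^{-1}(u),x^{-1}(w)\}$. The cost of $x$ is $\nu(x)=\sum_{e=uw\in E}\big(2x^{-1}(e)-x^{-1}(u)-x^{-1}(w)\big)$, and $\nu_*(G)$ is the minimum of $\nu(x)$ over all c-sequences for $G$. *)

theory Defs
  imports Complex_Main
begin

definition simple_graph :: "'a set \<Rightarrow> 'a set set \<Rightarrow> bool" where
  "simple_graph V E \<longleftrightarrow> finite V \<and> (\<forall>e\<in>E. e \<subseteq> V \<and> card e = 2)"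

definition elems :: "'a set \<Rightarrow> 'a set set \<Rightarrow> ('a + 'a set) set" where
  "elems V E = Inl ` V \<union> Inr ` E"

definition c_sequence :: "'a set \<Rightarrow> 'a set set \<Rightarrow> (nat \<Rightarrow> 'a + 'a set) \<Rightarrow> bool" where
  "c_sequence V E x \<longleftrightarrow>
     bij_betw x {1..card V + card E} (elems V E) \<and>
     (\<forall>e\<in>E. \<forall>v\<in>e. inv_into {1..card V + card E} x (Inr e) >
                     inv_into {1..card V + card E} x (Inl v))"

definition cseq_cost :: "'a set \<Rightarrow> 'a set set \<Rightarrow> (nat \<Rightarrow> 'a + 'a set) \<Rightarrow> int" where
  "cseq_cost V E x =
     (let pos = inv_into {1..card V + card E} x in
      \<Sum>e\<in>E. 2 * int (pos (Inr e)) - (\<Sum>v\<in>e. int (pos (Inl v))))"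

definition nu_star :: "'a set \<Rightarrow> 'a set set \<Rightarrow> int" where
  "nu_star V E = Min (cseq_cost V E ` {x. c_sequence V E x})"

definition K_vertices :: "nat \<Rightarrow> nat set" where
  "K_vertices n = {1..n}"

definition K_edges :: "nat \<Rightarrow> nat set set" where
  "K_edges n = {{u, v} | u v. u \<in> {1..n} \<and> v \<in> {1..n} \<and> u \<noteq> v}"

end

theory Submission
  imports Defs
begin

fun tri :: "nat \<Rightarrow> nat" where
  "tri 0 = 0" | "tri (Suc k) = tri k + k"

lemma tri_choose: "tri k = k choose 2"
  by (induction k) (auto simp: numeral_2_eq_2)

lemma tri_mono: "i \<le> j \<Longrightarrow> tri i \<le> tri j"
proof (induction j)
  case 0 then show ?case by simp
next
  case (Suc j) then show ?case by (cases "i = Suc j") auto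
qed

lemma tri_2: "2 * tri k = k * (k - 1)"
proof (induction k)
  case (Suc k) then show ?case by (cases k) (auto simp: algebra_simps)
qed simp

lemma K_edges_eq: "K_edges n = {B. B \<subseteq> {1..n} \<and> card B = 2}"
  unfolding K_edges_def by (auto simp: card_2_iff) blast

lemma card_K_edges: "card (K_edges n) = tri n"
  unfolding K_edges_eq by (simp add: n_subsets tri_choose)

lemma finite_K_edges: "finite (K_edges n)"
  unfolding K_edges_eq by (rule finite_subset[of _ "Pow {1..n}"]) auto

lemma K_edge_form:
  assumes "e \<in> K_edges n"
  obtains j k where "e = {j, k}" "1 \<le> j" "j < k" "k \<le> n"
proof -
  from assms obtain u v where "e = {u, v}" "u \<in> {1..n}" "v \<in> {1..n}" "u \<noteq> v"
    unfolding K_edges_def by auto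
  then show ?thesis using that[of u v] that[of v u] by (cases "u < v") (auto simp: insert_commute)
qed

lemma deg_K:
  assumes "v \<in> {1..n}"
  shows "card {e \<in> K_edges n. v \<in> e} = n - 1"
proof -
  have "{e \<in> K_edges n. v \<in> e} = (\<lambda>u. {u, v}) ` ({1..n} - {v})"
    unfolding K_edges_def using assms by auto blast
  moreover have "inj_on (\<lambda>u. {u, v}) ({1..n} - {v})"
    by (auto simp: inj_on_def doubleton_eq_iff)
  ultimately show ?thesis using assms by (simp add: card_image)
qed

lemma S0_closed: "6 * (\<Sum>k\<in>{1..n}. tri k + 1) = 6 * n + (n + 1) * n * (n - 1)"
proof (induction n)
  case 0 then show ?case by simp
next
  case (Suc n)
  have "6 * (\<Sum>k\<in>{1..Suc n}. tri k + 1) = 6 * (\<Sum>k\<in>{1..n}. tri k + 1) + 6 * (tri (Suc n) + 1)"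
    by simp
  also have "\<dots> = 6 * n + (n + 1) * n * (n - 1) + 3 * (2 * tri (Suc n)) + 6" using Suc by simp
  also have "\<dots> = 6 * Suc n + (Suc n + 1) * Suc n * (Suc n - 1)"
    unfolding tri_2 by (cases n) (auto simp: algebra_simps)
  finally show ?case .
qed


lemma card_KV: "card (K_vertices n) = n" by (simp add: K_vertices_def)

lemma sum_elems:
  fixes f :: "nat + nat set \<Rightarrow> int"
  assumes "finite V" "finite E"
  shows "sum f (elems V E) = (\<Sum>v\<in>V. f (Inl v)) + (\<Sum>e\<in>E. f (Inr e))"
  unfolding elems_def using assms
  by (subst sum.union_disjoint) (auto simp: sum.reindex)

lemma pos_bij:
  assumes "c_sequence V E x"
  shows "bij_betw (inv_into {1..card V + card E} x) (elems V E) {1..card V + card E}"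
  using assms unfolding c_sequence_def by (simp add: bij_betw_inv_into)

lemma cost_formula:
  assumes cs: "c_sequence (K_vertices n) (K_edges n) x"
  defines "L \<equiv> n + tri n"
  defines "pos \<equiv> inv_into {1..L} x"
  shows "cseq_cost (K_vertices n) (K_edges n) x
     = 2 * int (\<Sum>{1..L}) - int (n + 1) * (\<Sum>v\<in>{1..n}. int (pos (Inl v)))"
proof -
  let ?V = "K_vertices n" and ?E = "K_edges n"
  have LL: "card ?V + card ?E = L" by (simp add: card_KV card_K_edges L_def)
  have bij: "bij_betw pos (elems ?V ?E) {1..L}" using pos_bij[OF cs] LL pos_def by simp
  have fE: "finite ?E" by (rule finite_K_edges)
  define S where "S = (\<Sum>v\<in>{1..n}. int (pos (Inl v)))"
  have "sum (\<lambda>a. int (pos a)) (elems ?V ?E) = sum int {1..L}"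
    using sum.reindex_bij_betw[OF bij, of int] by simp
  also have "\<dots> = int (\<Sum>{1..L})" by simp
  finally have T: "S + (\<Sum>e\<in>?E. int (pos (Inr e))) = int (\<Sum>{1..L})"
    using sum_elems[OF _ fE, of ?V "\<lambda>a. int (pos a)"] by (simp add: K_vertices_def S_def)
  have sub: "\<And>e. e \<in> ?E \<Longrightarrow> e = {v \<in> {1..n}. v \<in> e}" unfolding K_edges_eq by auto
  have "(\<Sum>e\<in>?E. \<Sum>v\<in>e. int (pos (Inl v))) = (\<Sum>e\<in>?E. \<Sum>v\<in>{v \<in> {1..n}. v \<in> e}. int (pos (Inl v)))"
    using sub by (intro sum.cong) auto
  also have "\<dots> = (\<Sum>v\<in>{1..n}. \<Sum>e\<in>{e \<in> ?E. v \<in> e}. int (pos (Inl v)))"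
    by (rule sum.swap_restrict) (auto simp: fE)
  also have "\<dots> = (\<Sum>v\<in>{1..n}. int (n - 1) * int (pos (Inl v)))"
    by (intro sum.cong) (auto simp: deg_K)
  also have "\<dots> = int (n - 1) * S" by (simp add: S_def sum_distrib_left)
  finally have D: "(\<Sum>e\<in>?E. \<Sum>v\<in>e. int (pos (Inl v))) = int (n - 1) * S" .
  have "cseq_cost ?V ?E x = (\<Sum>e\<in>?E. 2 * int (pos (Inr e)) - (\<Sum>v\<in>e. int (pos (Inl v))))"
    unfolding cseq_cost_def Let_def LL pos_def ..
  also have "\<dots> = 2 * (\<Sum>e\<in>?E. int (pos (Inr e))) - int (n - 1) * S"
    by (simp add: sum_subtractf sum_distrib_left D)
  also have "\<dots> = 2 * int (\<Sum>{1..L}) - int (n + 1) * S"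
    using T by (cases n) (auto simp: algebra_simps S_def)
  finally show ?thesis unfolding S_def .
qed


lemma S_upper:
  assumes cs: "c_sequence (K_vertices n) (K_edges n) x"
  defines "L \<equiv> n + tri n"
  defines "pos \<equiv> inv_into {1..L} x"
  shows "(\<Sum>v\<in>{1..n}. pos (Inl v)) \<le> (\<Sum>k\<in>{1..n}. tri k + 1)"
proof -
  let ?V = "K_vertices n" and ?E = "K_edges n"
  have LL: "card ?V + card ?E = L" by (simp add: card_KV card_K_edges L_def)
  have bij: "bij_betw pos (elems ?V ?E) {1..L}" using pos_bij[OF cs] LL pos_def by simp
  have inj: "inj_on pos (elems ?V ?E)" using bij by (rule bij_betw_imp_inj_on)
  have img: "pos ` elems ?V ?E = {1..L}" using bij by (rule bij_betw_imp_surj_on)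
  have ord: "\<And>e u. e \<in> ?E \<Longrightarrow> u \<in> e \<Longrightarrow> pos (Inl u) < pos (Inr e)"
    using cs unfolding c_sequence_def LL pos_def by blast
  have fE: "finite ?E" by (rule finite_K_edges)
  have finel: "finite (elems ?V ?E)" unfolding elems_def using fE by (simp add: K_vertices_def)
  define A where "A v = {u \<in> {1..n}. pos (Inl u) < pos (Inl v)}" for v
  have key: "pos (Inl v) \<le> tri (card (A v) + 1) + 1" if v: "v \<in> {1..n}" for v
  proof -
    define P where "P = {a \<in> elems ?V ?E. pos a \<le> pos (Inl v)}"
    have vin: "Inl v \<in> elems ?V ?E" using v by (simp add: elems_def K_vertices_def)
    have pvL: "pos (Inl v) \<le> L" using img vin by auto
    have "pos ` P = {i \<in> pos ` elems ?V ?E. i \<le> pos (Inl v)}" unfolding P_def by blast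
    also have "\<dots> = {1..pos (Inl v)}" using img pvL by auto
    finally have "card (pos ` P) = pos (Inl v)" by simp
    moreover have "inj_on pos P" using inj unfolding P_def by (rule inj_on_subset) auto
    ultimately have cP: "card P = pos (Inl v)" by (simp add: card_image)
    have fA: "finite (A v)" unfolding A_def by simp
    have "P \<subseteq> Inl ` insert v (A v) \<union> Inr ` {B. B \<subseteq> A v \<and> card B = 2}"
    proof
      fix a assume a: "a \<in> P"
      show "a \<in> Inl ` insert v (A v) \<union> Inr ` {B. B \<subseteq> A v \<and> card B = 2}"
      proof (cases a)
        case (Inl u)
        then have "u \<in> {1..n}" "pos (Inl u) \<le> pos (Inl v)" using a
          unfolding P_def elems_def K_vertices_def by auto
        moreover have "u \<noteq> v \<Longrightarrow> pos (Inl u) \<noteq> pos (Inl v)"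
          using inj_onD[OF inj, of "Inl u" "Inl v"] \<open>u \<in> {1..n}\<close> v by (auto simp: elems_def K_vertices_def)
        ultimately show ?thesis using Inl unfolding A_def by (cases "u = v") auto
      next
        case (Inr e)
        then have e: "e \<in> ?E" "pos (Inr e) \<le> pos (Inl v)" using a
          unfolding P_def elems_def by auto
        have "e \<subseteq> A v" "card e = 2" using e ord[OF e(1)] unfolding A_def K_edges_eq
          by force+
        then show ?thesis using Inr by auto
      qed
    qed
    then have "card P \<le> card (Inl ` insert v (A v) \<union> Inr ` {B. B \<subseteq> A v \<and> card B = 2})"
      by (rule card_mono[rotated]) (auto intro: finite_subset[of _ "Pow (A v)"] simp: fA)
    also have "\<dots> \<le> card (Inl ` insert v (A v) :: (nat + nat set) set) + card (Inr ` {B. B \<subseteq> A v \<and> card B = 2} :: (nat + nat set) set)"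
      using card_Un_le by blast
    also have "\<dots> \<le> card (insert v (A v)) + card {B. B \<subseteq> A v \<and> card B = 2}"
      by (intro add_mono card_image_le) (auto intro: finite_subset[of _ "Pow (A v)"] simp: fA)
    also have "\<dots> \<le> (card (A v) + 1) + tri (card (A v))"
      by (intro add_mono) (auto simp: n_subsets fA tri_choose card_insert_le_m1)
    finally show ?thesis using cP by simp
  qed
  define rk where "rk v = card (A v) + 1" for v
  have rk_in: "rk v \<in> {1..n}" if v: "v \<in> {1..n}" for v
  proof -
    have "A v \<subseteq> {1..n} - {v}" unfolding A_def by auto
    then have "card (A v) \<le> n - 1" using v by (metis card_Diff_singleton card_atLeastAtMost card_mono finite_Diff finite_atLeastAtMost diff_Suc_1)
    then show ?thesis using v unfolding rk_def by auto
  qed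
  have rk_inj: "inj_on rk {1..n}"
  proof (rule inj_onI, rule ccontr)
    fix u v assume u: "u \<in> {1..n}" and v: "v \<in> {1..n}" and eq: "rk u = rk v" and ne: "u \<noteq> v"
    have "pos (Inl u) \<noteq> pos (Inl v)" 
      using inj_onD[OF inj, of "Inl u" "Inl v"] ne u v by (auto simp: elems_def K_vertices_def)
    have lt: "card (A a) < card (A b)" if "a \<in> {1..n}" "b \<in> {1..n}" "pos (Inl a) < pos (Inl b)" for a b
      by (rule psubset_card_mono) (use that in \<open>auto simp: A_def\<close>)
    then show False using eq u v \<open>pos (Inl u) \<noteq> pos (Inl v)\<close> unfolding rk_def
      by (metis less_irrefl nat_neq_iff add_right_cancel)
  qed
  have rk_img: "rk ` {1..n} = {1..n}"
    by (rule card_subset_eq) (use rk_in rk_inj in \<open>auto simp: card_image\<close>)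
  have "(\<Sum>v\<in>{1..n}. pos (Inl v)) \<le> (\<Sum>v\<in>{1..n}. tri (rk v) + 1)"
    unfolding rk_def by (intro sum_mono key) auto
  also have "\<dots> = (\<Sum>k\<in>rk ` {1..n}. tri k + 1)" using sum.reindex[OF rk_inj, of "\<lambda>k. tri k + 1"] by (simp add: comp_def)
  finally show ?thesis unfolding rk_img .
qed


fun blk :: "nat + nat set \<Rightarrow> nat" where
  "blk (Inl k) = k" | "blk (Inr e) = Max e"
fun off :: "nat + nat set \<Rightarrow> nat" where
  "off (Inl k) = 0" | "off (Inr e) = Min e"
definition gpos :: "nat + nat set \<Rightarrow> nat" where
  "gpos a = tri (blk a) + 1 + off a"

lemma tri_block:
  assumes "o1 < b1" "o2 < b2" "tri b1 + o1 = tri b2 + o2"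
  shows "b1 = b2"
proof (rule ccontr)
  assume "b1 \<noteq> b2"
  then consider "b1 < b2" | "b2 < b1" by linarith
  then show False
  proof cases
    case 1
    have "tri b1 + o1 < tri (Suc b1)" using assms by simp
    also have "\<dots> \<le> tri b2" using 1 by (intro tri_mono) simp
    finally show False using assms by simp
  next
    case 2
    have "tri b2 + o2 < tri (Suc b2)" using assms by simp
    also have "\<dots> \<le> tri b1" using 2 by (intro tri_mono) simp
    finally show False using assms by simp
  qed
qed

lemma elem_props:
  assumes "a \<in> elems (K_vertices n) (K_edges n)"
  shows "off a < blk a" "1 \<le> blk a" "blk a \<le> n"
    "\<And>e. a = Inr e \<Longrightarrow> 1 \<le> off a \<and> e = {off a, blk a}"
  using assms
proof -
  have "(off a < blk a \<and> 1 \<le> blk a \<and> blk a \<le> n) \<and> (\<forall>e. a = Inr e \<longrightarrow> 1 \<le> off a \<and> e = {off a, blk a})"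
  proof (cases a)
    case (Inl k) then show ?thesis using assms by (auto simp: elems_def K_vertices_def)
  next
    case (Inr e)
    then have "e \<in> K_edges n" using assms by (auto simp: elems_def)
    then obtain j k where "e = {j, k}" "1 \<le> j" "j < k" "k \<le> n" by (rule K_edge_form)
    then show ?thesis using Inr by auto
  qed
  then show "off a < blk a" "1 \<le> blk a" "blk a \<le> n"
    "\<And>e. a = Inr e \<Longrightarrow> 1 \<le> off a \<and> e = {off a, blk a}" by auto
qed

lemma gpos_inj: "inj_on gpos (elems (K_vertices n) (K_edges n))"
proof (rule inj_onI)
  fix a b assume a: "a \<in> elems (K_vertices n) (K_edges n)" and b: "b \<in> elems (K_vertices n) (K_edges n)"
    and eq: "gpos a = gpos b"
  have bb: "blk a = blk b" using tri_block[OF elem_props(1)[OF a] elem_props(1)[OF b]] eq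
    by (simp add: gpos_def)
  then have oo: "off a = off b" using eq by (simp add: gpos_def)
  show "a = b"
  proof (cases a)
    case (Inl k)
    then show ?thesis using bb oo elem_props(4)[OF b] by (cases b) auto
  next
    case (Inr e)
    then show ?thesis using bb oo elem_props(4)[OF b] elem_props(4)[OF a]
      by (cases b) auto
  qed
qed

lemma card_elems_K: "card (elems (K_vertices n) (K_edges n)) = n + tri n"
  unfolding elems_def
  by (subst card_Un_disjoint) (auto simp: card_image finite_K_edges card_K_edges K_vertices_def)

lemma gpos_bij: "bij_betw gpos (elems (K_vertices n) (K_edges n)) {1..n + tri n}"
proof -
  have sub: "gpos ` elems (K_vertices n) (K_edges n) \<subseteq> {1..n + tri n}"
  proof
    fix i assume "i \<in> gpos ` elems (K_vertices n) (K_edges n)"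
    then obtain a where a: "a \<in> elems (K_vertices n) (K_edges n)" "i = gpos a" by auto
    have "tri (blk a) + 1 + off a \<le> tri (Suc (blk a))" using elem_props(1)[OF a(1)] by simp
    also have "\<dots> \<le> tri (Suc n)" using elem_props(3)[OF a(1)] by (intro tri_mono) simp
    finally show "i \<in> {1..n + tri n}" using a by (simp add: gpos_def)
  qed
  have "gpos ` elems (K_vertices n) (K_edges n) = {1..n + tri n}"
    by (rule card_subset_eq[OF _ sub]) (simp_all add: card_image gpos_inj card_elems_K)
  then show ?thesis using gpos_inj by (simp add: bij_betw_def)
qed

lemma construction:
  "\<exists>x. c_sequence (K_vertices n) (K_edges n) x \<and>
     (\<forall>v\<in>{1..n}. inv_into {1..n + tri n} x (Inl v) = tri v + 1)"
proof -
  let ?x = "inv_into (elems (K_vertices n) (K_edges n)) gpos"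
  have LL: "card (K_vertices n) + card (K_edges n) = n + tri n" by (simp add: card_KV card_K_edges)
  have bx: "bij_betw ?x {1..n + tri n} (elems (K_vertices n) (K_edges n))"
    by (rule bij_betw_inv_into[OF gpos_bij])
  have inv: "inv_into {1..n + tri n} ?x a = gpos a" if "a \<in> elems (K_vertices n) (K_edges n)" for a
    by (rule inv_into_inv_into_eq[OF gpos_bij that])
  have "c_sequence (K_vertices n) (K_edges n) ?x"
    unfolding c_sequence_def LL
  proof (intro conjI bx ballI)
    fix e v assume e: "e \<in> K_edges n" and v: "v \<in> e"
    then have ie: "Inr e \<in> elems (K_vertices n) (K_edges n)" by (simp add: elems_def)
    have "v \<in> {1..n}" using e v unfolding K_edges_eq by auto
    then have iv: "Inl v \<in> elems (K_vertices n) (K_edges n)" by (simp add: elems_def K_vertices_def)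
    obtain j k where jk: "e = {j, k}" "1 \<le> j" "j < k" "k \<le> n" using e by (rule K_edge_form)
    have "tri v \<le> tri k" using v jk by (intro tri_mono) auto
    then show "inv_into {1..n + tri n} ?x (Inl v) < inv_into {1..n + tri n} ?x (Inr e)"
      unfolding inv[OF ie] inv[OF iv] gpos_def using jk by auto
  qed
  moreover have "\<forall>v\<in>{1..n}. inv_into {1..n + tri n} ?x (Inl v) = tri v + 1"
    using inv by (auto simp: elems_def K_vertices_def gpos_def)
  ultimately show ?thesis by blast
qed


lemma arith_final:
  assumes "n \<ge> 1"
  shows "12 * (2 * int (\<Sum>{1..n + tri n}) - int (n + 1) * int (\<Sum>k\<in>{1..n}. tri k + 1))
       = int ((n - 1) * n * (n + 1) * (n + 4))"
proof -
  define L where "L = n + tri n"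
  have g: "2 * (\<Sum>{1..L}) = L * (L + 1)"
    using double_gauss_sum_from_Suc_0[of L, where 'a=nat] by simp
  have t: "2 * int (tri n) = int n * (int n - 1)" using arg_cong[OF tri_2[of n], of int] assms by (simp add: of_nat_diff)
  have s: "6 * int (\<Sum>k\<in>{1..n}. tri k + 1) = 6 * int n + (int n + 1) * int n * (int n - 1)"
    using arg_cong[OF S0_closed[of n], of int] assms by (simp add: of_nat_diff algebra_simps)
  have gi: "2 * int (\<Sum>{1..L}) = int L * (int L + 1)" using arg_cong[OF g, of int] by (simp add: algebra_simps)
  have Li: "2 * int L = int n * (int n + 1)" using t unfolding L_def by (simp add: algebra_simps)
  have "4 * (12 * (2 * int (\<Sum>{1..L}) - int (n + 1) * int (\<Sum>k\<in>{1..n}. tri k + 1)))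
     = 12 * (2 * int L) * (2 * int L + 2) - 8 * (int n + 1) * (6 * int (\<Sum>k\<in>{1..n}. tri k + 1))"
    using gi by (simp add: algebra_simps)
  also have "\<dots> = 4 * ((int n - 1) * int n * (int n + 1) * (int n + 4))"
    unfolding Li s by (simp add: algebra_simps)
  also have "\<dots> = 4 * int ((n - 1) * n * (n + 1) * (n + 4))" using assms by (cases n) (simp_all add: algebra_simps)
  finally show ?thesis unfolding L_def by simp
qed


theorem theorem8:
  fixes n :: nat
  assumes "n \<ge> 1"
  shows "real_of_int (nu_star (K_vertices n) (K_edges n))
           = real ((n - 1) * n * (n + 1) * (n + 4)) / 12"
proof -
  define L where "L = n + tri n"
  define S0 where "S0 = (\<Sum>k\<in>{1..n}. tri k + 1)"
  define C0 where "C0 = 2 * int (\<Sum>{1..L}) - int (n + 1) * int S0"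
  define CS where "CS = cseq_cost (K_vertices n) (K_edges n) ` {x. c_sequence (K_vertices n) (K_edges n) x}"
  have lower: "C0 \<le> c \<and> c \<le> 2 * int (\<Sum>{1..L})" if cin: "c \<in> CS" for c
  proof -
    obtain x where x: "c_sequence (K_vertices n) (K_edges n) x" "c = cseq_cost (K_vertices n) (K_edges n) x"
      using cin unfolding CS_def by auto
    have cf: "c = 2 * int (\<Sum>{1..L}) - int (n + 1) * int (\<Sum>v\<in>{1..n}. inv_into {1..L} x (Inl v))"
      using cost_formula[OF x(1)] x(2) unfolding L_def by simp
    have "(\<Sum>v\<in>{1..n}. inv_into {1..L} x (Inl v)) \<le> S0"
      using S_upper[OF x(1)] unfolding L_def S0_def by simp
    then have "int (n + 1) * int (\<Sum>v\<in>{1..n}. inv_into {1..L} x (Inl v)) \<le> int (n + 1) * int S0"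
      by (metis mult_left_mono of_nat_le_iff of_nat_0_le_iff)
    moreover have "0 \<le> int (n + 1) * int (\<Sum>v\<in>{1..n}. inv_into {1..L} x (Inl v))" by (simp only: of_nat_mult[symmetric] of_nat_0_le_iff)
    ultimately show ?thesis using cf unfolding C0_def by linarith
  qed
  have attain: "C0 \<in> CS"
  proof -
    obtain x where x: "c_sequence (K_vertices n) (K_edges n) x"
      "\<forall>v\<in>{1..n}. inv_into {1..n + tri n} x (Inl v) = tri v + 1"
      using construction by blast
    have "(\<Sum>v\<in>{1..n}. inv_into {1..L} x (Inl v)) = S0"
      unfolding S0_def L_def using x(2) by (intro sum.cong) auto
    then have "(\<Sum>v\<in>{1..n}. int (inv_into {1..L} x (Inl v))) = int S0"
      unfolding of_nat_sum[symmetric] by (rule arg_cong)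
    then have "cseq_cost (K_vertices n) (K_edges n) x = C0"
      using cost_formula[OF x(1)] unfolding C0_def L_def by simp
    then show ?thesis unfolding CS_def using x(1) by (metis (mono_tags) image_eqI mem_Collect_eq)
  qed
  have fin: "finite CS"
    by (rule finite_subset[of _ "{C0..2 * int (\<Sum>{1..L})}"]) (use lower in auto)
  have "nu_star (K_vertices n) (K_edges n) = C0"
    unfolding nu_star_def CS_def[symmetric]
    by (rule Min_eqI[OF fin]) (use lower attain in auto)
  moreover have "12 * C0 = int ((n - 1) * n * (n + 1) * (n + 4))"
    using arith_final[OF assms] unfolding C0_def L_def S0_def .
  ultimately show ?thesis
    by (metis (mono_tags, opaque_lifting) of_int_mult of_int_of_nat_eq of_int_numeral
        nonzero_mult_div_cancel_left zero_neq_numeral)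
qed

end
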